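(* Let $H$ be a monoid that is either a group or such that its set of non-units $H\setminus H^\times$ does not form an almost-breakable semigroup. Then $\mathcal{P}_{\mathrm{fin},1}(H)$ is UmF if and only if $H$ is either trivial or isomorphic to the group of integers modulo $2$ under addition.
   Context: For a monoid $H$, $\mathcal{P}_{\mathrm{fin},1}(H)$ denotes the set of all non-empty finite subsets of $H$ containing $1_H$, a monoid under setwise multiplication $XY=\{xy: x\in X, y\in Y\}$. $H^\times$ is the group of units of $H$. Divisibility in a monoid $M$: $x\mid_M y$ iff $y\in MxM$; $x,y$ are associated if each divides the other; proper divisor means divides but not associated. A unit-divisor divides $1_M$; otherwise it is a non-unit-divisor. An irreducible is a non-unit-divisor $a$ with $a\neq xy$ for all non-unit-divisors $x,y$ properly dividing $a$. A factorization of $x$ is a word over the irreducibles whose product is $x$. For words $\mathfrak a,\mathfrak b$, $\mathfrak a\sqsubseteq\mathfrak b$ means $\mathfrak a$ is, up to associatedness of letters, a subword (subsequence) of a permutation of $\mathfrak b$; equivalence means $\sqsubseteq$ both ways. A factorization $\mathfrak a$ of $x$ is minimal if no factorization $\mathfrak b$ of $x$ satisfies $\mathfrak b\sqsubseteq\mathfrak a\not\sqsubseteq\mathfrak b$. $M$ is UmF if every non-unit-divisor is a product of irreducibles and any two minimal factorizations of an element are equivalent. A semigroup $S$ is almost-breakable if for all $x,y\in S$, $xy\in\{x,y\}$ or $yx\in\{x,y\}$. *)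

theory Defs
  imports "HOL-Algebra.Elementary_Groups" "HOL-Library.Multiset" "HOL-Library.Sublist"
begin

definition Pfin1 :: "('a, 'b) monoid_scheme \<Rightarrow> 'a set monoid" where
  "Pfin1 H = \<lparr> carrier = {X. finite X \<and> X \<noteq> {} \<and> X \<subseteq> carrier H \<and> \<one>\<^bsub>H\<^esub> \<in> X},
              monoid.mult = (\<lambda>X Y. {x \<otimes>\<^bsub>H\<^esub> y | x y. x \<in> X \<and> y \<in> Y}),
              one = {\<one>\<^bsub>H\<^esub>} \<rparr>"

definition almost_breakable :: "('a, 'b) monoid_scheme \<Rightarrow> 'a set \<Rightarrow> bool" where
  "almost_breakable H S \<longleftrightarrow>
     (\<forall>x\<in>S. \<forall>y\<in>S. x \<otimes>\<^bsub>H\<^esub> y \<in> {x, y} \<or> y \<otimes>\<^bsub>H\<^esub> x \<in> {x, y})"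

definition almost_breakable_semigroup :: "('a, 'b) monoid_scheme \<Rightarrow> 'a set \<Rightarrow> bool" where
  "almost_breakable_semigroup H S \<longleftrightarrow>
     (\<forall>x\<in>S. \<forall>y\<in>S. x \<otimes>\<^bsub>H\<^esub> y \<in> S) \<and> almost_breakable H S"

definition mdvd :: "('a, 'b) monoid_scheme \<Rightarrow> 'a \<Rightarrow> 'a \<Rightarrow> bool" where
  "mdvd M x y \<longleftrightarrow> (\<exists>u\<in>carrier M. \<exists>v\<in>carrier M. y = u \<otimes>\<^bsub>M\<^esub> x \<otimes>\<^bsub>M\<^esub> v)"

definition massoc :: "('a, 'b) monoid_scheme \<Rightarrow> 'a \<Rightarrow> 'a \<Rightarrow> bool" where
  "massoc M x y \<longleftrightarrow> mdvd M x y \<and> mdvd M y x"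

definition mproper_dvd :: "('a, 'b) monoid_scheme \<Rightarrow> 'a \<Rightarrow> 'a \<Rightarrow> bool" where
  "mproper_dvd M x y \<longleftrightarrow> mdvd M x y \<and> \<not> massoc M x y"

definition unit_divisor :: "('a, 'b) monoid_scheme \<Rightarrow> 'a \<Rightarrow> bool" where
  "unit_divisor M x \<longleftrightarrow> mdvd M x \<one>\<^bsub>M\<^esub>"

definition non_unit_divisor :: "('a, 'b) monoid_scheme \<Rightarrow> 'a \<Rightarrow> bool" where
  "non_unit_divisor M x \<longleftrightarrow> x \<in> carrier M \<and> \<not> unit_divisor M x"

definition mirreducible :: "('a, 'b) monoid_scheme \<Rightarrow> 'a \<Rightarrow> bool" where
  "mirreducible M a \<longleftrightarrow> non_unit_divisor M a \<and>
     \<not> (\<exists>x y. non_unit_divisor M x \<and> non_unit_divisor M y \<and>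
              mproper_dvd M x a \<and> mproper_dvd M y a \<and> a = x \<otimes>\<^bsub>M\<^esub> y)"

definition wprod :: "('a, 'b) monoid_scheme \<Rightarrow> 'a list \<Rightarrow> 'a" where
  "wprod M w = foldr (\<lambda>a b. a \<otimes>\<^bsub>M\<^esub> b) w \<one>\<^bsub>M\<^esub>"

definition factorization :: "('a, 'b) monoid_scheme \<Rightarrow> 'a \<Rightarrow> 'a list \<Rightarrow> bool" where
  "factorization M x w \<longleftrightarrow> (\<forall>a\<in>set w. mirreducible M a) \<and> wprod M w = x"

definition wle :: "('a, 'b) monoid_scheme \<Rightarrow> 'a list \<Rightarrow> 'a list \<Rightarrow> bool" where
  "wle M a b \<longleftrightarrow> (\<exists>p d. mset p = mset b \<and> subseq d p \<and> list_all2 (massoc M) a d)"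

definition wequiv :: "('a, 'b) monoid_scheme \<Rightarrow> 'a list \<Rightarrow> 'a list \<Rightarrow> bool" where
  "wequiv M a b \<longleftrightarrow> wle M a b \<and> wle M b a"

definition minimal_factorization :: "('a, 'b) monoid_scheme \<Rightarrow> 'a \<Rightarrow> 'a list \<Rightarrow> bool" where
  "minimal_factorization M x a \<longleftrightarrow> factorization M x a \<and>
     \<not> (\<exists>b. factorization M x b \<and> wle M b a \<and> \<not> wle M a b)"

definition UmF :: "('a, 'b) monoid_scheme \<Rightarrow> bool" where
  "UmF M \<longleftrightarrow>
     (\<forall>x. non_unit_divisor M x \<longrightarrow> (\<exists>w. factorization M x w)) \<and>
     (\<forall>x\<in>carrier M. \<forall>a b. minimal_factorization M x a \<and> minimal_factorization M x b
                       \<longrightarrow> wequiv M a b)"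

end

theory Submission
  imports Defs
begin


context monoid begin

lemma P_carrier: "X \<in> carrier (Pfin1 G) \<longleftrightarrow> finite X \<and> X \<noteq> {} \<and> X \<subseteq> carrier G \<and> \<one> \<in> X"
  by (simp add: Pfin1_def)

lemma P_mult: "X \<otimes>\<^bsub>Pfin1 G\<^esub> Y = {x \<otimes> y | x y. x \<in> X \<and> y \<in> Y}"
  by (simp add: Pfin1_def)

lemma P_one: "\<one>\<^bsub>Pfin1 G\<^esub> = {\<one>}"
  by (simp add: Pfin1_def)

lemma P_mult_closed:
  assumes "X \<in> carrier (Pfin1 G)" "Y \<in> carrier (Pfin1 G)"
  shows "X \<otimes>\<^bsub>Pfin1 G\<^esub> Y \<in> carrier (Pfin1 G)"
proof -
  have "{x \<otimes> y | x y. x \<in> X \<and> y \<in> Y} = (\<lambda>(x,y). x \<otimes> y) ` (X \<times> Y)" by auto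
  moreover have "finite (X \<times> Y)" using assms by (simp add: P_carrier)
  ultimately have "finite {x \<otimes> y | x y. x \<in> X \<and> y \<in> Y}" by simp
  moreover have "\<one> \<otimes> \<one> \<in> {x \<otimes> y | x y. x \<in> X \<and> y \<in> Y}" using assms by (auto simp: P_carrier)
  ultimately show ?thesis using assms by (auto simp: P_carrier P_mult)
qed

lemma P_mult_one_right: "X \<subseteq> carrier G \<Longrightarrow> X \<otimes>\<^bsub>Pfin1 G\<^esub> {\<one>} = X"
  by (auto simp: P_mult) (metis r_one subsetD)

lemma P_mult_one_left: "X \<subseteq> carrier G \<Longrightarrow> {\<one>} \<otimes>\<^bsub>Pfin1 G\<^esub> X = X"
  by (auto simp: P_mult) (metis l_one subsetD)

lemma mdvd_sub:
  assumes "X \<subseteq> carrier G" "mdvd (Pfin1 G) X Y" shows "X \<subseteq> Y"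
proof
  fix x assume x: "x \<in> X"
  from assms obtain U V where U: "U \<in> carrier (Pfin1 G)" and V: "V \<in> carrier (Pfin1 G)"
    and Y: "Y = (U \<otimes>\<^bsub>Pfin1 G\<^esub> X) \<otimes>\<^bsub>Pfin1 G\<^esub> V" unfolding mdvd_def by blast
  have "\<one> \<otimes> x \<in> U \<otimes>\<^bsub>Pfin1 G\<^esub> X" using U x by (auto simp: P_mult P_carrier)
  moreover have "\<one> \<in> V" using V by (simp add: P_carrier)
  ultimately have "(\<one> \<otimes> x) \<otimes> \<one> \<in> Y" unfolding Y P_mult by blast
  thus "x \<in> Y" using x assms(1) by auto
qed

lemma mdvd_refl: "X \<in> carrier (Pfin1 G) \<Longrightarrow> mdvd (Pfin1 G) X X"
  unfolding mdvd_def
  by (rule bexI[of _ "{\<one>}"], rule bexI[of _ "{\<one>}"])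
     (auto simp: P_mult_one_right P_mult_one_left P_carrier)

lemma massoc_refl: "X \<in> carrier (Pfin1 G) \<Longrightarrow> massoc (Pfin1 G) X X"
  by (simp add: massoc_def mdvd_refl)

lemma massoc_eq: "X \<subseteq> carrier G \<Longrightarrow> Y \<subseteq> carrier G \<Longrightarrow> massoc (Pfin1 G) X Y \<Longrightarrow> X = Y"
  unfolding massoc_def using mdvd_sub by blast

lemma unit_div_iff: "X \<in> carrier (Pfin1 G) \<Longrightarrow> unit_divisor (Pfin1 G) X \<longleftrightarrow> X = {\<one>}"
proof
  assume X: "X \<in> carrier (Pfin1 G)" and "unit_divisor (Pfin1 G) X"
  hence "X \<subseteq> {\<one>}" using mdvd_sub by (auto simp: unit_divisor_def P_one P_carrier)
  thus "X = {\<one>}" using X by (auto simp: P_carrier)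
next
  assume "X \<in> carrier (Pfin1 G)" "X = {\<one>}"
  thus "unit_divisor (Pfin1 G) X" unfolding unit_divisor_def P_one using mdvd_refl by simp
qed

lemma irr_D: "mirreducible (Pfin1 G) X \<Longrightarrow> X \<in> carrier (Pfin1 G) \<and> X \<noteq> {\<one>}"
  using unit_div_iff by (auto simp: mirreducible_def non_unit_divisor_def)

lemma irrI:
  assumes X: "X \<in> carrier (Pfin1 G)" "X \<noteq> {\<one>}"
    and H: "\<And>Y Z. Y \<in> carrier (Pfin1 G) \<Longrightarrow> Z \<in> carrier (Pfin1 G) \<Longrightarrow> Y \<subseteq> X \<Longrightarrow> Z \<subseteq> X
       \<Longrightarrow> Y \<noteq> X \<Longrightarrow> Z \<noteq> X \<Longrightarrow> Y \<noteq> {\<one>} \<Longrightarrow> Z \<noteq> {\<one>} \<Longrightarrow> Y \<otimes>\<^bsub>Pfin1 G\<^esub> Z \<noteq> X"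
  shows "mirreducible (Pfin1 G) X"
  unfolding mirreducible_def non_unit_divisor_def mproper_dvd_def
  using X H unit_div_iff mdvd_sub massoc_refl
  by (metis P_carrier)

lemma two_irr: "g \<in> carrier G \<Longrightarrow> g \<noteq> \<one> \<Longrightarrow> mirreducible (Pfin1 G) {\<one>, g}"
  by (rule irrI) (auto simp: P_carrier)

lemma wprod_Nil: "wprod (Pfin1 G) [] = {\<one>}"
  by (simp add: wprod_def P_one)

lemma wprod_Cons: "wprod (Pfin1 G) (A # w) = A \<otimes>\<^bsub>Pfin1 G\<^esub> wprod (Pfin1 G) w"
  by (simp add: wprod_def)

lemma wprod_single: "A \<subseteq> carrier G \<Longrightarrow> wprod (Pfin1 G) [A] = A"
  by (simp add: wprod_Cons wprod_Nil P_mult_one_right)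

lemma wprod_two: "B \<subseteq> carrier G \<Longrightarrow> wprod (Pfin1 G) [A, B] = A \<otimes>\<^bsub>Pfin1 G\<^esub> B"
  by (simp add: wprod_Cons wprod_Nil P_mult_one_right)

end


lemma subseq_mset: "subseq d p \<Longrightarrow> mset d \<subseteq># mset p"
proof (induction rule: list_emb.induct)
  case (list_emb_Cons xs ys y)
  then show ?case proof -
    have "mset ys \<subseteq># mset (y # ys)" by simp
    thus ?thesis using list_emb_Cons.IH by (rule subset_mset.order_trans[rotated])
  qed
next
  case (list_emb_Cons2 x y xs ys)
  then show ?case by simp
qed simp

lemma list_all2_eqI: "list_all2 R a d \<Longrightarrow> (\<And>x y. x \<in> set a \<Longrightarrow> y \<in> set d \<Longrightarrow> R x y \<Longrightarrow> x = y) \<Longrightarrow> a = d"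
  by (induction rule: list_all2_induct) auto

context monoid begin

lemma wle_mset:
  assumes "set a \<subseteq> carrier (Pfin1 G)" "set b \<subseteq> carrier (Pfin1 G)" "wle (Pfin1 G) a b"
  shows "mset a \<subseteq># mset b"
proof -
  obtain p d where p: "mset p = mset b" and d: "subseq d p" and r: "list_all2 (massoc (Pfin1 G)) a d"
    using assms(3) unfolding wle_def by blast
  have "set d \<subseteq> set p" using subseq_mset[OF d] by (metis mset_subset_eqD set_mset_mset subsetI)
  also have "set p = set b" using p by (metis set_mset_mset)
  finally have sd: "set d \<subseteq> carrier (Pfin1 G)" using assms(2) by blast
  have "a = d" using r
  proof (rule list_all2_eqI)
    fix x y assume "x \<in> set a" "y \<in> set d" "massoc (Pfin1 G) x y"
    moreover have "x \<in> carrier (Pfin1 G)" using \<open>x \<in> set a\<close> assms(1) by blast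
    hence "x \<subseteq> carrier G" by (simp add: P_carrier)
    moreover have "y \<in> carrier (Pfin1 G)" using \<open>y \<in> set d\<close> sd by blast
    hence "y \<subseteq> carrier G" by (simp add: P_carrier)
    ultimately show "x = y" using massoc_eq by blast
  qed
  thus ?thesis using subseq_mset[OF d] p by simp
qed

lemma mset_wle:
  assumes "set a \<subseteq> carrier (Pfin1 G)" "mset a \<subseteq># mset b"
  shows "wle (Pfin1 G) a b"
proof -
  obtain r where r: "mset r = mset b - mset a" by (metis ex_mset)
  have "mset (a @ r) = mset b" using r assms(2) by simp
  moreover have "subseq a (a @ r)" by (rule subseq_rev_drop_many) simp
  moreover have "list_all2 (massoc (Pfin1 G)) a a"
    by (rule list.rel_refl_strong) (use assms(1) massoc_refl in blast)
  ultimately show ?thesis unfolding wle_def by blast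
qed

lemma fact_carrier: "factorization (Pfin1 G) X a \<Longrightarrow> set a \<subseteq> carrier (Pfin1 G)"
  unfolding factorization_def using irr_D by blast

lemma minimalI:
  assumes f: "factorization (Pfin1 G) X a"
    and H: "\<And>b. mset b \<subset># mset a \<Longrightarrow> set b \<subseteq> carrier (Pfin1 G) \<Longrightarrow> wprod (Pfin1 G) b \<noteq> X"
  shows "minimal_factorization (Pfin1 G) X a"
  unfolding minimal_factorization_def
proof (intro conjI f notI, elim exE conjE)
  fix b assume fb: "factorization (Pfin1 G) X b" and l: "wle (Pfin1 G) b a" and nl: "\<not> wle (Pfin1 G) a b"
  have sb: "set b \<subseteq> carrier (Pfin1 G)" using fb by (rule fact_carrier)
  have sa: "set a \<subseteq> carrier (Pfin1 G)" using f by (rule fact_carrier)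
  have "mset b \<subseteq># mset a" using wle_mset[OF sb sa l] .
  moreover have "mset b \<noteq> mset a" using nl mset_wle[OF sa] by force
  ultimately have "mset b \<subset># mset a" by simp
  from H[OF this sb] fb show False by (simp add: factorization_def)
qed

lemma not_UmF:
  assumes "X \<in> carrier (Pfin1 G)" "minimal_factorization (Pfin1 G) X a"
    "minimal_factorization (Pfin1 G) X b" "mset a \<noteq> mset b"
  shows "\<not> UmF (Pfin1 G)"
proof
  assume "UmF (Pfin1 G)"
  hence "wequiv (Pfin1 G) a b" using assms unfolding UmF_def by blast
  moreover have "set a \<subseteq> carrier (Pfin1 G)" "set b \<subseteq> carrier (Pfin1 G)"
    using assms(2,3) fact_carrier by (auto simp: minimal_factorization_def)
  ultimately have "mset a \<subseteq># mset b" "mset b \<subseteq># mset a"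
    using wle_mset unfolding wequiv_def by blast+
  thus False using assms(4) by simp
qed

lemma two_minimal:
  assumes Y: "mirreducible (Pfin1 G) Y" and Z: "mirreducible (Pfin1 G) Z"
    and X: "X = Y \<otimes>\<^bsub>Pfin1 G\<^esub> Z" "X \<noteq> Y" "X \<noteq> Z" "X \<noteq> {\<one>}"
  shows "minimal_factorization (Pfin1 G) X [Y, Z]"
proof (rule minimalI)
  have "Z \<subseteq> carrier G" using irr_D[OF Z] by (simp add: P_carrier)
  thus "factorization (Pfin1 G) X [Y, Z]" using Y Z X by (simp add: factorization_def wprod_two)
next
  fix b assume b: "mset b \<subset># mset [Y, Z]" "set b \<subseteq> carrier (Pfin1 G)"
  have "size (mset b) < size (mset [Y,Z])" using b(1) by (rule mset_subset_size)
  hence "length b < 2" by simp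
  moreover have "set_mset (mset b) \<subseteq> set_mset (mset [Y,Z])"
    using b(1) by (meson mset_subset_eqD subset_mset.less_imp_le subsetI)
  hence "set b \<subseteq> {Y, Z}" by simp
  ultimately have "b = [] \<or> b = [Y] \<or> b = [Z]"
    by (cases b) auto
  thus "wprod (Pfin1 G) b \<noteq> X" using X b(2) by (auto simp: wprod_Nil wprod_single P_carrier)
qed

end


context monoid begin

lemma P_mult_insert: "insert a A \<otimes>\<^bsub>Pfin1 G\<^esub> B = (\<lambda>b. a \<otimes> b) ` B \<union> (A \<otimes>\<^bsub>Pfin1 G\<^esub> B)"
  by (auto simp: P_mult)

lemma P_mult_empty: "{} \<otimes>\<^bsub>Pfin1 G\<^esub> B = {}"
  by (auto simp: P_mult)

lemma power_fail:
  assumes g: "g \<in> carrier G" "g \<noteq> \<one>" "g \<otimes> g \<noteq> \<one>" "g \<otimes> g \<noteq> g"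
  shows "\<not> UmF (Pfin1 G)"
proof -
  define A where "A = {\<one>, g}"
  define C where "C = {\<one>, g \<otimes> g}"
  have gg: "g \<otimes> g \<in> carrier G" using g by simp
  have iA: "mirreducible (Pfin1 G) A" unfolding A_def using g two_irr by simp
  have iC: "mirreducible (Pfin1 G) C" unfolding C_def using gg g two_irr by simp
  have AC: "A \<noteq> C" using g unfolding A_def C_def by auto
  show ?thesis
  proof (cases "g \<otimes> (g \<otimes> g) \<in> {\<one>, g, g \<otimes> g}")
    case True
    define X where "X = {\<one>, g, g \<otimes> g}"
    have X1: "X = A \<otimes>\<^bsub>Pfin1 G\<^esub> A" unfolding X_def A_def using g
      by (auto simp: P_mult_insert P_mult_empty)
    have X2: "X = A \<otimes>\<^bsub>Pfin1 G\<^esub> C" unfolding X_def A_def C_def using g True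
      by (auto simp: P_mult_insert P_mult_empty)
    have Xc: "X \<in> carrier (Pfin1 G)" unfolding X_def using g by (simp add: P_carrier)
    have m1: "minimal_factorization (Pfin1 G) X [A, A]"
      by (rule two_minimal[OF iA iA X1]) (use g in \<open>auto simp: X_def A_def\<close>)
    have m2: "minimal_factorization (Pfin1 G) X [A, C]"
      by (rule two_minimal[OF iA iC X2]) (use g in \<open>auto simp: X_def A_def C_def\<close>)
    show ?thesis by (rule not_UmF[OF Xc m1 m2]) (use AC in simp)
  next
    case False
    define X where "X = {\<one>, g, g \<otimes> g, g \<otimes> (g \<otimes> g)}"
    have X2: "X = A \<otimes>\<^bsub>Pfin1 G\<^esub> C" unfolding X_def A_def C_def using g
      by (auto simp: P_mult_insert P_mult_empty)
    have AA: "A \<otimes>\<^bsub>Pfin1 G\<^esub> A = {\<one>, g, g \<otimes> g}" unfolding A_def using g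
      by (auto simp: P_mult_insert P_mult_empty)
    have AAA: "A \<otimes>\<^bsub>Pfin1 G\<^esub> {\<one>, g, g \<otimes> g} = X" unfolding X_def A_def using g
      by (auto simp: P_mult_insert P_mult_empty)
    have Ac: "A \<subseteq> carrier G" unfolding A_def using g by simp
    have Xc: "X \<in> carrier (Pfin1 G)" unfolding X_def using g by (simp add: P_carrier)
    have m2: "minimal_factorization (Pfin1 G) X [A, C]"
      by (rule two_minimal[OF iA iC X2]) (use g False in \<open>auto simp: X_def A_def C_def\<close>)
    have m3: "minimal_factorization (Pfin1 G) X [A, A, A]"
    proof (rule minimalI)
      show "factorization (Pfin1 G) X [A, A, A]"
        using iA Ac AA AAA by (simp add: factorization_def wprod_Cons wprod_Nil P_mult_one_right)
    next
      fix b assume b: "mset b \<subset># mset [A, A, A]" "set b \<subseteq> carrier (Pfin1 G)"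
      have "size (mset b) < size (mset [A,A,A])" using b(1) by (rule mset_subset_size)
      hence lb: "length b < 3" by simp
      have "set_mset (mset b) \<subseteq> set_mset (mset [A,A,A])"
        using b(1) by (meson mset_subset_eqD subset_mset.less_imp_le subsetI)
      hence "set b \<subseteq> {A}" by simp
      hence "\<forall>y\<in>set b. y = A" by blast
      hence "b = replicate (length b) A" using replicate_length_same[of b A] by simp
      moreover obtain n where n: "n = length b" by simp
      ultimately have rep: "b = replicate n A" by simp
      have "n = 0 \<or> n = 1 \<or> n = 2" using lb n by arith
      hence "b = [] \<or> b = [A] \<or> b = [A, A]" using rep by (auto simp: numeral_2_eq_2)
      moreover have "g \<otimes> (g \<otimes> g) \<in> X" unfolding X_def by simp
      moreover have "g \<otimes> (g \<otimes> g) \<notin> {\<one>}" "g \<otimes> (g \<otimes> g) \<notin> A" "g \<otimes> (g \<otimes> g) \<notin> {\<one>, g, g \<otimes> g}"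
        using False unfolding A_def by auto
      moreover have "wprod (Pfin1 G) [] = {\<one>}" "wprod (Pfin1 G) [A] = A" "wprod (Pfin1 G) [A, A] = {\<one>, g, g \<otimes> g}"
        using Ac AA by (simp_all only: wprod_Nil wprod_single wprod_two)
      ultimately show "wprod (Pfin1 G) b \<noteq> X" by metis
    qed
    show ?thesis by (rule not_UmF[OF Xc m3 m2]) simp
  qed
qed

lemma sub_two:
  assumes "Y \<in> carrier (Pfin1 G)" "Y \<subseteq> {\<one>, e, f}" "Y \<noteq> {\<one>, e, f}" "Y \<noteq> {\<one>}"
  shows "Y = {\<one>, e} \<or> Y = {\<one>, f}"
proof -
  have "\<one> \<in> Y" using assms(1) by (simp add: P_carrier)
  thus ?thesis using assms(2-4) by blast
qed

lemma pair_fail: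
  assumes c: "e \<in> carrier G" "f \<in> carrier G" and n: "e \<noteq> \<one>" "f \<noteq> \<one>" "e \<noteq> f"
    and ef: "e \<otimes> f \<notin> {\<one>, e, f}" and fe: "f \<otimes> e \<notin> {\<one>, e, f}"
    and ee: "e \<otimes> e \<noteq> f" and ff: "f \<otimes> f = \<one> \<or> f \<otimes> f = f"
  shows "\<not> UmF (Pfin1 G)"
proof -
  define E where "E = {\<one>, e}"
  define F where "F = {\<one>, f}"
  define S where "S = {\<one>, e, f}"
  define X where "X = {\<one>, e, f, e \<otimes> f}"
  have iE: "mirreducible (Pfin1 G) E" unfolding E_def using c n two_irr by simp
  have iF: "mirreducible (Pfin1 G) F" unfolding F_def using c n two_irr by simp
  have iS: "mirreducible (Pfin1 G) S"
  proof (rule irrI)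
    show "S \<in> carrier (Pfin1 G)" "S \<noteq> {\<one>}" unfolding S_def using c n by (auto simp: P_carrier)
  next
    fix Y Z assume Y: "Y \<in> carrier (Pfin1 G)" "Y \<subseteq> S" "Y \<noteq> S" "Y \<noteq> {\<one>}"
      and Z: "Z \<in> carrier (Pfin1 G)" "Z \<subseteq> S" "Z \<noteq> S" "Z \<noteq> {\<one>}"
    have "Y = E \<or> Y = F" using sub_two Y unfolding S_def E_def F_def by blast
    moreover have "Z = E \<or> Z = F" using sub_two Z unfolding S_def E_def F_def by blast
    moreover have "E \<otimes>\<^bsub>Pfin1 G\<^esub> E \<noteq> S"
    proof
      assume "E \<otimes>\<^bsub>Pfin1 G\<^esub> E = S"
      hence "f \<in> E \<otimes>\<^bsub>Pfin1 G\<^esub> E" unfolding S_def by simp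
      thus False unfolding E_def using c n ee by (auto simp: P_mult_insert P_mult_empty)
    qed
    moreover have "F \<otimes>\<^bsub>Pfin1 G\<^esub> F \<noteq> S"
    proof
      assume "F \<otimes>\<^bsub>Pfin1 G\<^esub> F = S"
      hence "e \<in> F \<otimes>\<^bsub>Pfin1 G\<^esub> F" unfolding S_def by simp
      thus False unfolding F_def using c n ff by (auto simp: P_mult_insert P_mult_empty)
    qed
    moreover have "E \<otimes>\<^bsub>Pfin1 G\<^esub> F \<noteq> S"
    proof
      assume "E \<otimes>\<^bsub>Pfin1 G\<^esub> F = S"
      moreover have "e \<otimes> f \<in> E \<otimes>\<^bsub>Pfin1 G\<^esub> F" unfolding E_def F_def by (auto simp: P_mult_insert)
      ultimately show False using ef unfolding S_def by simp
    qed
    moreover have "F \<otimes>\<^bsub>Pfin1 G\<^esub> E \<noteq> S"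
    proof
      assume "F \<otimes>\<^bsub>Pfin1 G\<^esub> E = S"
      moreover have "f \<otimes> e \<in> F \<otimes>\<^bsub>Pfin1 G\<^esub> E" unfolding E_def F_def by (auto simp: P_mult_insert)
      ultimately show False using fe unfolding S_def by simp
    qed
    ultimately show "Y \<otimes>\<^bsub>Pfin1 G\<^esub> Z \<noteq> S" by blast
  qed
  have X1: "X = E \<otimes>\<^bsub>Pfin1 G\<^esub> F" unfolding X_def E_def F_def using c
    by (auto simp: P_mult_insert P_mult_empty)
  have X2: "X = S \<otimes>\<^bsub>Pfin1 G\<^esub> F" unfolding X_def S_def F_def using c ff
    by (auto simp: P_mult_insert P_mult_empty)
  have Xc: "X \<in> carrier (Pfin1 G)" unfolding X_def using c by (simp add: P_carrier)
  have m1: "minimal_factorization (Pfin1 G) X [E, F]"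
    by (rule two_minimal[OF iE iF X1]) (use n ef in \<open>auto simp: X_def E_def F_def\<close>)
  have m2: "minimal_factorization (Pfin1 G) X [S, F]"
    by (rule two_minimal[OF iS iF X2]) (use n ef in \<open>auto simp: X_def S_def F_def\<close>)
  have "E \<noteq> S" unfolding E_def S_def using n by auto
  thus ?thesis by (intro not_UmF[OF Xc m1 m2]) simp
qed

end


context monoid begin

lemma sq_cases: "UmF (Pfin1 G) \<Longrightarrow> g \<in> carrier G \<Longrightarrow> g \<noteq> \<one> \<Longrightarrow> g \<otimes> g = \<one> \<or> g \<otimes> g = g"
  using power_fail by blast

lemma small_UmF:
  assumes a: "a \<in> carrier G" "carrier G \<subseteq> {\<one>, a}" "a \<otimes> a = \<one>"
  shows "UmF (Pfin1 G)"
proof -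
  define T where "T = {\<one>, a}"
  have Tc: "T \<subseteq> carrier G" unfolding T_def using a by simp
  have TT: "T \<otimes>\<^bsub>Pfin1 G\<^esub> T = T" unfolding T_def using a by (auto simp: P_mult_insert P_mult_empty)
  have carP: "X = {\<one>} \<or> X = T" if "X \<in> carrier (Pfin1 G)" for X
  proof -
    have "\<one> \<in> X" "X \<subseteq> {\<one>, a}" using that a by (auto simp: P_carrier)
    thus ?thesis unfolding T_def by blast
  qed
  have irrT: "A = T" if "mirreducible (Pfin1 G) A" for A
    using irr_D[OF that] carP by blast
  have wT: "wprod (Pfin1 G) (replicate (Suc n) T) = T" for n
  proof (induction n)
    case 0 then show ?case using Tc by (simp add: wprod_single)
  next
    case (Suc n) then show ?case using TT by (simp add: wprod_Cons)
  qed
  have min_form: "(X = {\<one>} \<longrightarrow> w = []) \<and> (X \<noteq> {\<one>} \<longrightarrow> w = [T])"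
    if m: "minimal_factorization (Pfin1 G) X w" for X w
  proof -
    have f: "factorization (Pfin1 G) X w" using m by (simp add: minimal_factorization_def)
    have "\<forall>y\<in>set w. y = T" using f irrT by (auto simp: factorization_def)
    moreover obtain n where n: "n = length w" by simp
    ultimately have rep: "w = replicate n T" using replicate_length_same[of w T] by simp
    have n1: "n \<le> 1"
    proof (rule ccontr)
      assume "\<not> n \<le> 1"
      then obtain k where k: "n = Suc (Suc k)" by (metis Suc_le_D not_less_eq_eq One_nat_def)
      have XT: "X = T" using f rep k wT[of "Suc k"] by (simp add: factorization_def)
      have iT: "mirreducible (Pfin1 G) T" using f rep k by (simp add: factorization_def)
      have Tcar: "T \<in> carrier (Pfin1 G)" using irr_D[OF iT] by simp
      have fb: "factorization (Pfin1 G) X [T]" using iT XT Tc by (simp add: factorization_def wprod_single)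
      have "wle (Pfin1 G) [T] w" using Tcar rep k by (intro mset_wle) auto
      moreover have "\<not> wle (Pfin1 G) w [T]"
      proof
        assume "wle (Pfin1 G) w [T]"
        moreover have "set [T] \<subseteq> carrier (Pfin1 G)" using Tcar by simp
        ultimately have "mset w \<subseteq># mset [T]" using wle_mset fact_carrier[OF f] by blast
        hence "size (mset w) \<le> size (mset [T])" by (rule size_mset_mono)
        thus False using rep k by simp
      qed
      ultimately show False using m fb unfolding minimal_factorization_def by blast
    qed
    show ?thesis
    proof (cases n)
      case 0
      then show ?thesis using rep f by (auto simp: factorization_def wprod_Nil)
    next
      case (Suc m)
      then have "m = 0" using n1 by simp
      hence w: "w = [T]" using rep Suc by simp
      have "T \<noteq> {\<one>}" using f w irr_D by (auto simp: factorization_def)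
      then show ?thesis using w f Tc by (auto simp: factorization_def wprod_single)
    qed
  qed
  show ?thesis unfolding UmF_def
  proof (intro conjI allI impI ballI)
    fix X assume X: "non_unit_divisor (Pfin1 G) X"
    hence Xc: "X \<in> carrier (Pfin1 G)" and X1: "X \<noteq> {\<one>}"
      using unit_div_iff by (auto simp: non_unit_divisor_def)
    hence XT: "X = T" using carP by blast
    hence "a \<noteq> \<one>" using X1 unfolding T_def by auto
    hence "mirreducible (Pfin1 G) T" unfolding T_def using a two_irr by simp
    hence "factorization (Pfin1 G) X [T]" using XT Tc by (simp add: factorization_def wprod_single)
    thus "\<exists>w. factorization (Pfin1 G) X w" by blast
  next
    fix X v w assume X: "X \<in> carrier (Pfin1 G)"
      and m: "minimal_factorization (Pfin1 G) X v \<and> minimal_factorization (Pfin1 G) X w"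
    have "(X = {\<one>} \<longrightarrow> v = []) \<and> (X \<noteq> {\<one>} \<longrightarrow> v = [T])" "(X = {\<one>} \<longrightarrow> w = []) \<and> (X \<noteq> {\<one>} \<longrightarrow> w = [T])"
      using m min_form by blast+
    hence vw: "v = w" by (cases "X = {\<one>}") auto
    have "set v \<subseteq> carrier (Pfin1 G)" using m fact_carrier by (auto simp: minimal_factorization_def)
    hence "wle (Pfin1 G) v v" by (rule mset_wle) simp
    thus "wequiv (Pfin1 G) v w" using vw by (simp add: wequiv_def)
  qed
qed

lemma iso_small:
  assumes "G \<cong> integer_mod_group 2"
  shows "\<exists>a. a \<in> carrier G \<and> carrier G \<subseteq> {\<one>, a} \<and> a \<otimes> a = \<one>"
proof -
  have c2: "carrier (integer_mod_group 2) = {0, 1}" by (auto simp: carrier_integer_mod_group)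
  obtain h where h: "h \<in> hom G (integer_mod_group 2)" "bij_betw h (carrier G) {0, 1}"
    using assms unfolding is_iso_def iso_def c2[symmetric] by blast
  have hm: "h (x \<otimes> y) = (h x + h y) mod 2" if "x \<in> carrier G" "y \<in> carrier G" for x y
    using h(1) that unfolding hom_def by simp
  have inj: "inj_on h (carrier G)" using h(2) by (simp add: bij_betw_def)
  have img: "h ` carrier G = {0, 1}" using h(2) by (simp add: bij_betw_def)
  have hv: "h x = 0 \<or> h x = 1" if "x \<in> carrier G" for x using img that by blast
  have h1: "h \<one> = 0"
  proof -
    have "h \<one> = (h \<one> + h \<one>) mod 2" using hm[of \<one> \<one>] by simp
    thus ?thesis using hv[of \<one>] by auto
  qed
  obtain a where a: "a \<in> carrier G" "h a = 1" using img by (metis imageE insertI1 insertI2)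
  have "h (a \<otimes> a) = h \<one>" using hm[OF a(1) a(1)] a h1 by simp
  hence aa: "a \<otimes> a = \<one>" using inj a by (simp add: inj_on_def)
  have "carrier G \<subseteq> {\<one>, a}"
  proof
    fix x assume x: "x \<in> carrier G"
    show "x \<in> {\<one>, a}"
    proof (cases "h x = 0")
      case True thus ?thesis using inj x h1 by (auto simp: inj_on_def)
    next
      case False hence "h x = h a" using hv[OF x] a by simp
      thus ?thesis using inj x a by (auto simp: inj_on_def)
    qed
  qed
  thus ?thesis using a aa by blast
qed

end


lemma (in monoid) two_iso:
  assumes c: "carrier G = {\<one>, x}" and x: "x \<noteq> \<one>" "x \<otimes> x = \<one>"
  shows "G \<cong> integer_mod_group 2"
proof -
  define h where "h = (\<lambda>z. if z = \<one> then 0 else 1 :: int)"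
  have c2: "carrier (integer_mod_group 2) = {0, 1}" by (auto simp: carrier_integer_mod_group)
  have "h \<in> hom G (integer_mod_group 2)"
    unfolding hom_def using c x by (auto simp: h_def c2)
  moreover have "bij_betw h (carrier G) (carrier (integer_mod_group 2))"
    unfolding bij_betw_def c c2 using x by (auto simp: h_def inj_on_def)
  ultimately show ?thesis unfolding is_iso_def iso_def by blast
qed

theorem corollary3p7:
  fixes H :: "('a, 'b) monoid_scheme"
  assumes "monoid H"
    and "group H \<or> \<not> almost_breakable_semigroup H (carrier H - Units H)"
  shows "UmF (Pfin1 H) \<longleftrightarrow> carrier H = {\<one>\<^bsub>H\<^esub>} \<or> H \<cong> integer_mod_group 2"
proof
  assume "carrier H = {\<one>\<^bsub>H\<^esub>} \<or> H \<cong> integer_mod_group 2"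
  then obtain a where "a \<in> carrier H" "carrier H \<subseteq> {\<one>\<^bsub>H\<^esub>, a}" "a \<otimes>\<^bsub>H\<^esub> a = \<one>\<^bsub>H\<^esub>"
  proof
    assume "carrier H = {\<one>\<^bsub>H\<^esub>}"
    thus thesis using that[of "\<one>\<^bsub>H\<^esub>"] monoid.one_closed[OF assms(1)] monoid.l_one[OF assms(1)] by simp
  next
    assume "H \<cong> integer_mod_group 2"
    thus thesis using that monoid.iso_small[OF assms(1)] by blast
  qed
  thus "UmF (Pfin1 H)" using monoid.small_UmF[OF assms(1)] by blast
next
  assume U: "UmF (Pfin1 H)"
  interpret monoid H by (rule assms(1))
  show "carrier H = {\<one>\<^bsub>H\<^esub>} \<or> H \<cong> integer_mod_group 2"
  proof (rule ccontr)
    assume nt: "\<not> (carrier H = {\<one>\<^bsub>H\<^esub>} \<or> H \<cong> integer_mod_group 2)"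
    have sq: "g \<otimes>\<^bsub>H\<^esub> g = \<one>\<^bsub>H\<^esub> \<or> g \<otimes>\<^bsub>H\<^esub> g = g" if "g \<in> carrier H" "g \<noteq> \<one>\<^bsub>H\<^esub>" for g
      using sq_cases[OF U that] .
    show False
    proof (cases "group H")
      case True
      interpret group H by (rule True)
      have l_cancel: "(a \<otimes>\<^bsub>H\<^esub> b = a \<otimes>\<^bsub>H\<^esub> c) = (b = c)"
        if "a \<in> carrier H" "b \<in> carrier H" "c \<in> carrier H" for a b c using that by simp
      have inv2: "g \<otimes>\<^bsub>H\<^esub> g = \<one>\<^bsub>H\<^esub>" if g: "g \<in> carrier H" "g \<noteq> \<one>\<^bsub>H\<^esub>" for g
      proof -
        have "g \<otimes>\<^bsub>H\<^esub> g \<noteq> g \<otimes>\<^bsub>H\<^esub> \<one>\<^bsub>H\<^esub>" using g l_cancel[of g g "\<one>\<^bsub>H\<^esub>"] by simp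
        thus ?thesis using sq[OF g] g by simp
      qed
      obtain x where x: "x \<in> carrier H" "x \<noteq> \<one>\<^bsub>H\<^esub>" using nt one_closed by blast
      have xx: "x \<otimes>\<^bsub>H\<^esub> x = \<one>\<^bsub>H\<^esub>" using inv2[OF x] .
      obtain y where y: "y \<in> carrier H" "y \<noteq> \<one>\<^bsub>H\<^esub>" "y \<noteq> x"
      proof (rule ccontr)
        assume "\<not> thesis"
        hence "carrier H = {\<one>\<^bsub>H\<^esub>, x}" using that x one_closed by blast
        thus False using two_iso x xx nt by blast
      qed
      have yy: "y \<otimes>\<^bsub>H\<^esub> y = \<one>\<^bsub>H\<^esub>" using inv2[OF y(1,2)] .
      have xy: "x \<otimes>\<^bsub>H\<^esub> y \<notin> {\<one>\<^bsub>H\<^esub>, x, y}"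
        using x y xx l_cancel[of x y x] l_cancel[of x y "\<one>\<^bsub>H\<^esub>"] right_cancel[of y x "\<one>\<^bsub>H\<^esub>"] by auto
      have yx: "y \<otimes>\<^bsub>H\<^esub> x \<notin> {\<one>\<^bsub>H\<^esub>, x, y}"
        using x y yy l_cancel[of y x y] l_cancel[of y x "\<one>\<^bsub>H\<^esub>"] right_cancel[of x y "\<one>\<^bsub>H\<^esub>"] by auto
      show False using pair_fail[OF x(1) y(1) x(2) y(2) y(3)[symmetric] xy yx] xx yy y U by simp
    next
      case False
      hence nab: "\<not> almost_breakable_semigroup H (carrier H - Units H)" using assms(2) by blast
      have idem: "g \<noteq> \<one>\<^bsub>H\<^esub> \<and> g \<otimes>\<^bsub>H\<^esub> g = g" if g: "g \<in> carrier H - Units H" for g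
      proof -
        have g1: "g \<noteq> \<one>\<^bsub>H\<^esub>" using g by auto
        moreover have "g \<otimes>\<^bsub>H\<^esub> g \<noteq> \<one>\<^bsub>H\<^esub>" using g unfolding Units_def by blast
        ultimately show ?thesis using sq g by blast
      qed
      have rinv: "False" if "e \<in> carrier H - Units H" "z \<in> carrier H" "e \<otimes>\<^bsub>H\<^esub> z = \<one>\<^bsub>H\<^esub>" for e z
      proof -
        have "e = e \<otimes>\<^bsub>H\<^esub> (e \<otimes>\<^bsub>H\<^esub> z)" using that by simp
        also have "\<dots> = (e \<otimes>\<^bsub>H\<^esub> e) \<otimes>\<^bsub>H\<^esub> z" using that by (simp add: m_assoc)
        also have "\<dots> = \<one>\<^bsub>H\<^esub>" using idem[OF that(1)] that by simp
        finally show False using idem[OF that(1)] by simp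
      qed
      show False
      proof (cases "\<forall>x\<in>carrier H - Units H. \<forall>y\<in>carrier H - Units H. x \<otimes>\<^bsub>H\<^esub> y \<in> carrier H - Units H")
        case False
        then obtain x y where xy: "x \<in> carrier H - Units H" "y \<in> carrier H - Units H"
          "x \<otimes>\<^bsub>H\<^esub> y \<notin> carrier H - Units H" by blast
        hence "x \<otimes>\<^bsub>H\<^esub> y \<in> Units H" by auto
        then obtain u where u: "u \<in> carrier H" "(x \<otimes>\<^bsub>H\<^esub> y) \<otimes>\<^bsub>H\<^esub> u = \<one>\<^bsub>H\<^esub>"
          unfolding Units_def by blast
        have "x \<otimes>\<^bsub>H\<^esub> (y \<otimes>\<^bsub>H\<^esub> u) = \<one>\<^bsub>H\<^esub>" using u xy by (simp add: m_assoc)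
        moreover have "y \<otimes>\<^bsub>H\<^esub> u \<in> carrier H" using xy u by simp
        ultimately show False using rinv[OF xy(1)] by blast
      next
        case True
        then obtain e f where ef: "e \<in> carrier H - Units H" "f \<in> carrier H - Units H"
          "e \<otimes>\<^bsub>H\<^esub> f \<notin> {e, f}" "f \<otimes>\<^bsub>H\<^esub> e \<notin> {e, f}"
          using nab unfolding almost_breakable_semigroup_def almost_breakable_def by blast
        have ie: "e \<noteq> \<one>\<^bsub>H\<^esub>" "e \<otimes>\<^bsub>H\<^esub> e = e" using idem ef by blast+
        have if': "f \<noteq> \<one>\<^bsub>H\<^esub>" "f \<otimes>\<^bsub>H\<^esub> f = f" using idem ef by blast+
        have neq: "e \<noteq> f" using ef ie by auto
        have "e \<otimes>\<^bsub>H\<^esub> f \<noteq> \<one>\<^bsub>H\<^esub>" using rinv[OF ef(1)] ef by blast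
        hence c1: "e \<otimes>\<^bsub>H\<^esub> f \<notin> {\<one>\<^bsub>H\<^esub>, e, f}" using ef by simp
        have "f \<otimes>\<^bsub>H\<^esub> e \<noteq> \<one>\<^bsub>H\<^esub>" using rinv[OF ef(2)] ef by blast
        hence c2: "f \<otimes>\<^bsub>H\<^esub> e \<notin> {\<one>\<^bsub>H\<^esub>, e, f}" using ef by simp
        show False using pair_fail[of e f] ef ie if' neq c1 c2 U by simp
      qed
    qed
  qed
qed


end
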